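(* Let $G$ be a countable infinite group, let $N\lhd G$ be a finite normal subgroup and let $H=G/N$. If the universal minimal flow $M(H)$ has the separated covering property (as an $H$-flow), then $M(G)$ has the separated covering property (as a $G$-flow).
   Context: The universal minimal flow $M(G)$ is the (unique up to isomorphism) minimal $G$-flow admitting a $G$-equivariant continuous surjection onto every minimal $G$-flow. For finite $D\subseteq G$, $S\subseteq G$ is $D$-separated if $Dg\cap Dh=\emptyset$ for distinct $g,h\in S$. A minimal $G$-flow $X$ has the separated covering property if for every finite $D\subseteq G$ and every non-empty open $U\subseteq X$ there is a $D$-separated $S\subseteq G$ with $S^{-1}U=X$. *)

theory Defs
  imports "HOL-Analysis.Analysis" "HOL-Algebra.Coset"
begin

definition G_flow :: "('g, 'm) monoid_scheme \<Rightarrow> 'a topology \<Rightarrow> ('g \<Rightarrow> 'a \<Rightarrow> 'a) \<Rightarrow> bool" where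
  "G_flow G X act \<longleftrightarrow>
     group G \<and> compact_space X \<and> Hausdorff_space X \<and>
     (\<forall>g\<in>carrier G. continuous_map X X (act g)) \<and>
     (\<forall>x\<in>topspace X. act \<one>\<^bsub>G\<^esub> x = x) \<and>
     (\<forall>g\<in>carrier G. \<forall>h\<in>carrier G. \<forall>x\<in>topspace X.
         act (g \<otimes>\<^bsub>G\<^esub> h) x = act g (act h x))"

definition minimal_flow :: "('g, 'm) monoid_scheme \<Rightarrow> 'a topology \<Rightarrow> ('g \<Rightarrow> 'a \<Rightarrow> 'a) \<Rightarrow> bool" where
  "minimal_flow G X act \<longleftrightarrow>
     G_flow G X act \<and> topspace X \<noteq> {} \<and>
     (\<forall>Y. closedin X Y \<and> Y \<noteq> {} \<and> (\<forall>g\<in>carrier G. act g ` Y \<subseteq> Y) \<longrightarrow> Y = topspace X)"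

definition equivariant_factor_map ::
  "('g, 'm) monoid_scheme \<Rightarrow> 'a topology \<Rightarrow> ('g \<Rightarrow> 'a \<Rightarrow> 'a) \<Rightarrow>
   'b topology \<Rightarrow> ('g \<Rightarrow> 'b \<Rightarrow> 'b) \<Rightarrow> ('a \<Rightarrow> 'b) \<Rightarrow> bool" where
  "equivariant_factor_map G X act Y act' \<phi> \<longleftrightarrow>
     continuous_map X Y \<phi> \<and> \<phi> ` topspace X = topspace Y \<and>
     (\<forall>g\<in>carrier G. \<forall>x\<in>topspace X. \<phi> (act g x) = act' g (\<phi> x))"

text \<open>Since HOL cannot quantify over types inside a formula, the
target flows range over flows whose points lie in the type 'g set set; every
minimal G-flow is a factor of beta G and so has cardinality at most
2^(2^|G|), hence is isomorphic to such a flow.\<close>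
definition universal_minimal_flow :: "('g, 'm) monoid_scheme \<Rightarrow> 'a topology \<Rightarrow> ('g \<Rightarrow> 'a \<Rightarrow> 'a) \<Rightarrow> bool" where
  "universal_minimal_flow G X act \<longleftrightarrow>
     minimal_flow G X act \<and>
     (\<forall>(Y :: 'g set set topology) act'. minimal_flow G Y act' \<longrightarrow>
        (\<exists>\<phi>. equivariant_factor_map G X act Y act' \<phi>))"

definition D_separated :: "('g, 'm) monoid_scheme \<Rightarrow> 'g set \<Rightarrow> 'g set \<Rightarrow> bool" where
  "D_separated G D S \<longleftrightarrow>
     (\<forall>g\<in>S. \<forall>h\<in>S. g \<noteq> h \<longrightarrow> (D #>\<^bsub>G\<^esub> g) \<inter> (D #>\<^bsub>G\<^esub> h) = {})"

definition separated_covering_property :: "('g, 'm) monoid_scheme \<Rightarrow> 'a topology \<Rightarrow> ('g \<Rightarrow> 'a \<Rightarrow> 'a) \<Rightarrow> bool" where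
  "separated_covering_property G X act \<longleftrightarrow>
     (\<forall>D U. finite D \<and> D \<subseteq> carrier G \<and> openin X U \<and> U \<noteq> {} \<longrightarrow>
        (\<exists>S. S \<subseteq> carrier G \<and> D_separated G D S \<and>
             (\<Union>s\<in>S. act (inv\<^bsub>G\<^esub> s) ` U) = topspace X))"

end

theory Submission imports Defs begin

definition img_top :: "'a topology \<Rightarrow> ('a \<Rightarrow> 'b) \<Rightarrow> 'b topology" where
  "img_top X f = topology (\<lambda>V. V \<subseteq> f ` topspace X \<and> openin X {x \<in> topspace X. f x \<in> V})"

lemma istopology_img: "istopology (\<lambda>V. V \<subseteq> f ` topspace X \<and> openin X {x \<in> topspace X. f x \<in> V})"
proof -
  have 1: "\<And>S T. {x \<in> topspace X. f x \<in> S \<inter> T} = {x \<in> topspace X. f x \<in> S} \<inter> {x \<in> topspace X. f x \<in> T}" by auto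
  have 2: "\<And>K. {x \<in> topspace X. f x \<in> \<Union>K} = (\<Union>V\<in>K. {x \<in> topspace X. f x \<in> V})" by auto
  show ?thesis unfolding istopology_def 1 2 by auto
qed

lemma openin_img: "openin (img_top X f) V \<longleftrightarrow> V \<subseteq> f ` topspace X \<and> openin X {x \<in> topspace X. f x \<in> V}"
  unfolding img_top_def using istopology_img[of f X] by simp

lemma topspace_img: "topspace (img_top X f) = f ` topspace X"
proof (rule subset_antisym)
  show "topspace (img_top X f) \<subseteq> f ` topspace X"
    unfolding topspace_def openin_img by blast
  have e: "{x \<in> topspace X. f x \<in> f ` topspace X} = topspace X" by auto
  have "openin (img_top X f) (f ` topspace X)" unfolding openin_img e by simp
  then show "f ` topspace X \<subseteq> topspace (img_top X f)" by (rule openin_subset)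
qed

lemma continuous_img: "continuous_map X (img_top X f) f"
  unfolding continuous_map_def topspace_img
  by (auto simp: openin_img)

lemma compact_img: "compact_space X \<Longrightarrow> compact_space (img_top X f)"
  by (metis compact_space_def continuous_img image_compactin topspace_img)

lemma flow_group: "G_flow G X act \<Longrightarrow> group G" by (simp add: G_flow_def)

lemma act_cont: "G_flow G X act \<Longrightarrow> g \<in> carrier G \<Longrightarrow> continuous_map X X (act g)"
  by (simp add: G_flow_def)

lemma act_in: "G_flow G X act \<Longrightarrow> g \<in> carrier G \<Longrightarrow> x \<in> topspace X \<Longrightarrow> act g x \<in> topspace X"
  by (meson act_cont continuous_map_image_subset_topspace image_subset_iff)

lemma act_mult: "G_flow G X act \<Longrightarrow> g \<in> carrier G \<Longrightarrow> h \<in> carrier G \<Longrightarrow> x \<in> topspace X \<Longrightarrow>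
   act (g \<otimes>\<^bsub>G\<^esub> h) x = act g (act h x)"
  by (simp add: G_flow_def)

lemma act_one: "G_flow G X act \<Longrightarrow> x \<in> topspace X \<Longrightarrow> act \<one>\<^bsub>G\<^esub> x = x"
  by (simp add: G_flow_def)

lemma act_inv_act: "G_flow G X act \<Longrightarrow> g \<in> carrier G \<Longrightarrow> x \<in> topspace X \<Longrightarrow> act (inv\<^bsub>G\<^esub> g) (act g x) = x"
proof -
  assume F: "G_flow G X act" and g: "g \<in> carrier G" and x: "x \<in> topspace X"
  have grp: "group G" using F by (rule flow_group)
  have ig: "inv\<^bsub>G\<^esub> g \<in> carrier G" using grp g by (rule group.inv_closed)
  have "act (inv\<^bsub>G\<^esub> g) (act g x) = act (inv\<^bsub>G\<^esub> g \<otimes>\<^bsub>G\<^esub> g) x" using act_mult[OF F ig g x] by simp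
  also have "\<dots> = act \<one>\<^bsub>G\<^esub> x" using group.l_inv[OF grp g] by simp
  also have "\<dots> = x" using act_one[OF F x] .
  finally show ?thesis .
qed

lemma act_act_inv: "G_flow G X act \<Longrightarrow> g \<in> carrier G \<Longrightarrow> x \<in> topspace X \<Longrightarrow> act g (act (inv\<^bsub>G\<^esub> g) x) = x"
proof -
  assume F: "G_flow G X act" and g: "g \<in> carrier G" and x: "x \<in> topspace X"
  have grp: "group G" using F by (rule flow_group)
  have ig: "inv\<^bsub>G\<^esub> g \<in> carrier G" using grp g by (rule group.inv_closed)
  have "act g (act (inv\<^bsub>G\<^esub> g) x) = act (g \<otimes>\<^bsub>G\<^esub> inv\<^bsub>G\<^esub> g) x" using act_mult[OF F g ig x] by simp
  also have "\<dots> = act \<one>\<^bsub>G\<^esub> x" using group.r_inv[OF grp g] by simp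
  also have "\<dots> = x" using act_one[OF F x] .
  finally show ?thesis .
qed

lemma act_open:
  assumes F: "G_flow G X act" and g: "g \<in> carrier G" and U: "openin X U"
  shows "openin X (act g ` U)"
proof -
  have ig: "inv\<^bsub>G\<^esub> g \<in> carrier G" using group.inv_closed[OF flow_group[OF F] g] .
  have "act g ` U = {x \<in> topspace X. act (inv\<^bsub>G\<^esub> g) x \<in> U}"
  proof
    show "act g ` U \<subseteq> {x \<in> topspace X. act (inv\<^bsub>G\<^esub> g) x \<in> U}"
    proof
      fix y assume "y \<in> act g ` U"
      then obtain u where u: "u \<in> U" "y = act g u" by blast
      have uX: "u \<in> topspace X" using u(1) openin_subset[OF U] by blast
      show "y \<in> {x \<in> topspace X. act (inv\<^bsub>G\<^esub> g) x \<in> U}"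
        using act_in[OF F g uX] act_inv_act[OF F g uX] u by simp
    qed
    show "{x \<in> topspace X. act (inv\<^bsub>G\<^esub> g) x \<in> U} \<subseteq> act g ` U"
    proof
      fix x assume "x \<in> {x \<in> topspace X. act (inv\<^bsub>G\<^esub> g) x \<in> U}"
      then have "x \<in> topspace X" "act (inv\<^bsub>G\<^esub> g) x \<in> U" by auto
      then have "x = act g (act (inv\<^bsub>G\<^esub> g) x)" using act_act_inv[OF F g] by simp
      then show "x \<in> act g ` U" using \<open>act (inv\<^bsub>G\<^esub> g) x \<in> U\<close> by (rule image_eqI)
    qed
  qed
  moreover have "openin X {x \<in> topspace X. act (inv\<^bsub>G\<^esub> g) x \<in> U}"
    by (rule openin_continuous_map_preimage[OF act_cont[OF F ig] U])
  ultimately show ?thesis by simp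
qed

lemma minimal_flowD:
  assumes "minimal_flow G X act" "closedin X Y" "Y \<noteq> {}" "\<forall>g\<in>carrier G. act g ` Y \<subseteq> Y"
  shows "Y = topspace X"
  using assms unfolding minimal_flow_def by auto

lemma minimal_flow_flow: "minimal_flow G X act \<Longrightarrow> G_flow G X act"
  unfolding minimal_flow_def by simp

lemma preimage_open: "G_flow G X act \<Longrightarrow> g \<in> carrier G \<Longrightarrow> openin X U \<Longrightarrow> openin X {x \<in> topspace X. act g x \<in> U}"
  by (rule openin_continuous_map_preimage[OF act_cont])

lemma minimal_cover:
  assumes M: "minimal_flow G X act" and U: "openin X U" "U \<noteq> {}"
  shows "\<exists>K. finite K \<and> K \<subseteq> carrier G \<and> topspace X \<subseteq> (\<Union>k\<in>K. {x \<in> topspace X. act k x \<in> U})"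
proof -
  have F: "G_flow G X act" using M by (rule minimal_flow_flow)
  have grp: "group G" using F by (rule flow_group)
  define W where "W = (\<Union>g\<in>carrier G. {x \<in> topspace X. act g x \<in> U})"
  have Wo: "openin X W" unfolding W_def
  proof (rule openin_Union, clarify)
    fix g assume "g \<in> carrier G"
    then show "openin X {x \<in> topspace X. act g x \<in> U}" using preimage_open[OF F _ U(1)] by simp
  qed
  define Y where "Y = topspace X - W"
  have Yc: "closedin X Y" unfolding Y_def using Wo by (rule closedin_diff[OF closedin_topspace])
  have Yinv: "\<forall>g\<in>carrier G. act g ` Y \<subseteq> Y"
  proof (intro ballI subsetI)
    fix g y assume g: "g \<in> carrier G" and "y \<in> act g ` Y"
    then obtain x where x: "x \<in> Y" "y = act g x" by auto
    have xX: "x \<in> topspace X" using x Y_def by auto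
    have "y \<notin> W"
    proof
      assume "y \<in> W"
      then obtain k where k: "k \<in> carrier G" "act k y \<in> U" unfolding W_def by auto
      have "act (k \<otimes>\<^bsub>G\<^esub> g) x \<in> U" using act_mult[OF F k(1) g xX] k x by simp
      moreover have "k \<otimes>\<^bsub>G\<^esub> g \<in> carrier G" using group.subgroup_self[OF grp] k(1) g by (rule subgroup.m_closed)
      ultimately have "x \<in> W" unfolding W_def using xX by auto
      then show False using x Y_def by auto
    qed
    then show "y \<in> Y" unfolding Y_def using act_in[OF F g xX] x by auto
  qed
  have "Y = {}"
  proof (rule ccontr)
    assume "Y \<noteq> {}"
    then have YX: "Y = topspace X" using minimal_flowD[OF M Yc _ Yinv] by simp
    obtain u where u: "u \<in> U" using U by auto
    have uX: "u \<in> topspace X" using u openin_subset[OF U(1)] by auto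
    have one: "\<one>\<^bsub>G\<^esub> \<in> carrier G" by (rule monoid.one_closed[OF group.is_monoid[OF grp]])
    have "act \<one>\<^bsub>G\<^esub> u \<in> U" using act_one[OF F uX] u by simp
    then have "u \<in> W" unfolding W_def using one uX by auto
    then show False using YX Y_def uX by auto
  qed
  then have cov: "topspace X \<subseteq> \<Union>((\<lambda>g. {x \<in> topspace X. act g x \<in> U}) ` carrier G)"
    unfolding Y_def W_def by auto
  have cs: "compact_space X" using F by (simp add: G_flow_def)
  have opn: "\<forall>V\<in>(\<lambda>g. {x \<in> topspace X. act g x \<in> U}) ` carrier G. openin X V"
    using preimage_open[OF F _ U(1)] by auto
  obtain \<F> where \<F>: "finite \<F>" "\<F> \<subseteq> (\<lambda>g. {x \<in> topspace X. act g x \<in> U}) ` carrier G" "topspace X \<subseteq> \<Union>\<F>"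
    using cs cov opn unfolding compact_space_alt by meson
  then obtain K where "K \<subseteq> carrier G" "finite K" "\<F> = (\<lambda>g. {x \<in> topspace X. act g x \<in> U}) ` K"
    by (meson finite_subset_image)
  then show ?thesis using \<F>(3) by auto
qed

lemma return_infinite:
  assumes M: "minimal_flow G X act" and inf: "infinite (carrier G)"
    and U: "openin X U" "U \<noteq> {}" and y: "y \<in> topspace X"
  shows "infinite {g \<in> carrier G. act g y \<in> U}"
proof
  assume fin: "finite {g \<in> carrier G. act g y \<in> U}"
  have F: "G_flow G X act" using M by (rule minimal_flow_flow)
  have grp: "group G" using F by (rule flow_group)
  obtain K where K: "finite K" "K \<subseteq> carrier G" "topspace X \<subseteq> (\<Union>k\<in>K. {x \<in> topspace X. act k x \<in> U})"
    using minimal_cover[OF M U] by blast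
  have "carrier G \<subseteq> (\<lambda>(k, r). inv\<^bsub>G\<^esub> k \<otimes>\<^bsub>G\<^esub> r) ` (K \<times> {g \<in> carrier G. act g y \<in> U})"
  proof
    fix g assume g: "g \<in> carrier G"
    have "act g y \<in> topspace X" using act_in[OF F g y] .
    then obtain k where k: "k \<in> K" "act k (act g y) \<in> U" using K(3) by auto
    have kc: "k \<in> carrier G" using k K by auto
    have "act (k \<otimes>\<^bsub>G\<^esub> g) y \<in> U" using act_mult[OF F kc g y] k by simp
    moreover have kg: "k \<otimes>\<^bsub>G\<^esub> g \<in> carrier G" using group.subgroup_self[OF grp] kc g by (rule subgroup.m_closed)
    moreover have "g = inv\<^bsub>G\<^esub> k \<otimes>\<^bsub>G\<^esub> (k \<otimes>\<^bsub>G\<^esub> g)"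
      using group.inv_solve_left[OF grp g kc kg] by simp
    ultimately show "g \<in> (\<lambda>(k, r). inv\<^bsub>G\<^esub> k \<otimes>\<^bsub>G\<^esub> r) ` (K \<times> {g \<in> carrier G. act g y \<in> U})"
      using k(1) by force
  qed
  then have "finite (carrier G)" using K(1) fin by (meson finite_SigmaI finite_imageI finite_subset)
  then show False using inf by simp
qed

lemma img_flow:
  assumes F: "G_flow G X act" and grpK: "group K"
    and Haus: "Hausdorff_space (img_top X f)"
    and h3: "\<forall>k\<in>carrier K. \<exists>g\<in>carrier G. \<forall>x\<in>topspace X. f (act g x) = actY k (f x)"
    and h4: "\<forall>x\<in>topspace X. actY \<one>\<^bsub>K\<^esub> (f x) = f x"
    and h5: "\<forall>k1\<in>carrier K. \<forall>k2\<in>carrier K. \<forall>x\<in>topspace X.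
               actY (k1 \<otimes>\<^bsub>K\<^esub> k2) (f x) = actY k1 (actY k2 (f x))"
  shows "G_flow K (img_top X f) actY"
proof -
  have cs: "compact_space X" using F by (simp add: G_flow_def)
  have cont: "\<forall>k\<in>carrier K. continuous_map (img_top X f) (img_top X f) (actY k)"
  proof
    fix k assume k: "k \<in> carrier K"
    then obtain g where g: "g \<in> carrier G" "\<forall>x\<in>topspace X. f (act g x) = actY k (f x)" using h3 by blast
    show "continuous_map (img_top X f) (img_top X f) (actY k)"
      unfolding continuous_map_def
    proof (intro conjI allI impI)
      show "actY k \<in> topspace (img_top X f) \<rightarrow> topspace (img_top X f)"
      proof
        fix y assume "y \<in> topspace (img_top X f)"
        then obtain x where x: "x \<in> topspace X" "y = f x" unfolding topspace_img by blast
        have "actY k y = f (act g x)" using g(2) x by simp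
        then show "actY k y \<in> topspace (img_top X f)" unfolding topspace_img using act_in[OF F g(1) x(1)] by simp
      qed
      fix U assume U: "openin (img_top X f) U"
      then have U': "openin X {x \<in> topspace X. f x \<in> U}" unfolding openin_img by simp
      have eq: "{x \<in> topspace X. f x \<in> {y \<in> topspace (img_top X f). actY k y \<in> U}}
             = {x \<in> topspace X. act g x \<in> {x \<in> topspace X. f x \<in> U}}"
        using g(2) act_in[OF F g(1)] unfolding topspace_img by auto
      show "openin (img_top X f) {y \<in> topspace (img_top X f). actY k y \<in> U}"
        unfolding openin_img
      proof
        show "{y \<in> topspace (img_top X f). actY k y \<in> U} \<subseteq> f ` topspace X" unfolding topspace_img by blast
        show "openin X {x \<in> topspace X. f x \<in> {y \<in> topspace (img_top X f). actY k y \<in> U}}"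
          unfolding eq by (rule preimage_open[OF F g(1) U'])
      qed
    qed
  qed
  show ?thesis unfolding G_flow_def
  proof (intro conjI)
    show "group K" by (rule grpK)
    show "compact_space (img_top X f)" using cs by (rule compact_img)
    show "Hausdorff_space (img_top X f)" by (rule Haus)
    show "\<forall>k\<in>carrier K. continuous_map (img_top X f) (img_top X f) (actY k)" by (rule cont)
    show "\<forall>x\<in>topspace (img_top X f). actY \<one>\<^bsub>K\<^esub> x = x" unfolding topspace_img using h4 by blast
    show "\<forall>g\<in>carrier K. \<forall>h\<in>carrier K. \<forall>x\<in>topspace (img_top X f). actY (g \<otimes>\<^bsub>K\<^esub> h) x = actY g (actY h x)"
      unfolding topspace_img using h5 by blast
  qed
qed

lemma img_minimal:
  assumes M: "minimal_flow G X act" and FY: "G_flow K (img_top X f) actY"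
    and h2: "\<forall>g\<in>carrier G. \<exists>k\<in>carrier K. \<forall>x\<in>topspace X. f (act g x) = actY k (f x)"
  shows "minimal_flow K (img_top X f) actY"
  unfolding minimal_flow_def
proof (intro conjI allI impI)
  have F: "G_flow G X act" using M by (rule minimal_flow_flow)
  show "G_flow K (img_top X f) actY" by (rule FY)
  show "topspace (img_top X f) \<noteq> {}" using M unfolding minimal_flow_def topspace_img by simp
  fix Z assume Z: "closedin (img_top X f) Z \<and> Z \<noteq> {} \<and> (\<forall>g\<in>carrier K. actY g ` Z \<subseteq> Z)"
  have ZY: "Z \<subseteq> f ` topspace X" using closedin_subset[of "img_top X f" Z] Z unfolding topspace_img by simp
  define P where "P = {x \<in> topspace X. f x \<in> Z}"
  have Pc: "closedin X P" unfolding P_def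
    using closedin_continuous_map_preimage[OF continuous_img] Z by blast
  have Pne: "P \<noteq> {}" using Z ZY unfolding P_def by blast
  have Pinv: "\<forall>g\<in>carrier G. act g ` P \<subseteq> P"
  proof (intro ballI subsetI)
    fix g y assume g: "g \<in> carrier G" and "y \<in> act g ` P"
    then obtain x where x: "x \<in> topspace X" "f x \<in> Z" "y = act g x" unfolding P_def by blast
    obtain k where k: "k \<in> carrier K" "\<forall>x\<in>topspace X. f (act g x) = actY k (f x)" using h2 g by blast
    have "f y = actY k (f x)" using k(2) x by simp
    also have "\<dots> \<in> Z" using Z k(1) x(2) by blast
    finally show "y \<in> P" unfolding P_def using act_in[OF F g x(1)] x(3) by simp
  qed
  have "P = topspace X" using minimal_flowD[OF M Pc Pne Pinv] .
  then show "Z = topspace (img_top X f)" unfolding topspace_img using ZY P_def by auto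
qed

lemma orbit_dense:
  assumes M: "minimal_flow K Z act" and z0: "z0 \<in> topspace Z"
  shows "Z closure_of ((\<lambda>k. act k z0) ` carrier K) = topspace Z"
proof -
  have F: "G_flow K Z act" using M by (rule minimal_flow_flow)
  have grp: "group K" using F by (rule flow_group)
  define Orb where "Orb = (\<lambda>k. act k z0) ` carrier K"
  have OZ: "Orb \<subseteq> topspace Z" unfolding Orb_def using act_in[OF F _ z0] by auto
  have one: "\<one>\<^bsub>K\<^esub> \<in> carrier K" by (rule monoid.one_closed[OF group.is_monoid[OF grp]])
  have "z0 \<in> Orb" unfolding Orb_def using act_one[OF F z0] one by (metis image_eqI)
  then have ne: "Z closure_of Orb \<noteq> {}" using closure_of_subset[OF OZ] by auto
  have inv: "\<forall>k\<in>carrier K. act k ` (Z closure_of Orb) \<subseteq> Z closure_of Orb"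
  proof
    fix k assume k: "k \<in> carrier K"
    have "act k ` Orb \<subseteq> Orb"
    proof
      fix y assume "y \<in> act k ` Orb"
      then obtain j where j: "j \<in> carrier K" "y = act k (act j z0)" unfolding Orb_def by auto
      have "y = act (k \<otimes>\<^bsub>K\<^esub> j) z0" using act_mult[OF F k j(1) z0] j by simp
      moreover have "k \<otimes>\<^bsub>K\<^esub> j \<in> carrier K" using group.subgroup_self[OF grp] k j(1) by (rule subgroup.m_closed)
      ultimately show "y \<in> Orb" unfolding Orb_def by blast
    qed
    then have "Z closure_of (act k ` Orb) \<subseteq> Z closure_of Orb" by (rule closure_of_mono)
    moreover have "act k ` (Z closure_of Orb) \<subseteq> Z closure_of (act k ` Orb)"
      by (rule continuous_map_image_closure_subset[OF act_cont[OF F k]])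
    ultimately show "act k ` (Z closure_of Orb) \<subseteq> Z closure_of Orb" by blast
  qed
  show ?thesis using minimal_flowD[OF M closedin_closure_of ne inv] unfolding Orb_def .
qed

lemma transfer:
  fixes K :: "('k,'m) monoid_scheme" and Z :: "'z topology" and act :: "'k \<Rightarrow> 'z \<Rightarrow> 'z"
  assumes M: "minimal_flow K Z act"
  shows "\<exists>(F :: 'z \<Rightarrow> 'k set set). inj_on F (topspace Z) \<and>
     minimal_flow K (img_top Z F) (\<lambda>k y. F (act k (inv_into (topspace Z) F y)))"
proof -
  have FL: "G_flow K Z act" using M by (rule minimal_flow_flow)
  have grp: "group K" using FL by (rule flow_group)
  have HZ: "Hausdorff_space Z" using FL by (simp add: G_flow_def)
  obtain z0 where z0: "z0 \<in> topspace Z" using M unfolding minimal_flow_def by blast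
  define F where "F z = {A. A \<subseteq> carrier K \<and> z \<in> Z closure_of ((\<lambda>k. act k z0) ` A)}" for z
  have dense: "Z closure_of ((\<lambda>k. act k z0) ` carrier K) = topspace Z" by (rule orbit_dense[OF M z0])
  have inj: "inj_on F (topspace Z)"
  proof (rule inj_onI, rule ccontr)
    fix z1 z2 assume z1: "z1 \<in> topspace Z" and z2: "z2 \<in> topspace Z" and eq: "F z1 = F z2" and ne: "z1 \<noteq> z2"
    obtain W1 W2 where W: "openin Z W1" "openin Z W2" "z1 \<in> W1" "z2 \<in> W2" "disjnt W1 W2"
      using HZ z1 z2 ne unfolding Hausdorff_space_def by blast
    define A where "A = {k \<in> carrier K. act k z0 \<in> W1}"
    have AO: "(\<lambda>k. act k z0) ` A = W1 \<inter> (\<lambda>k. act k z0) ` carrier K" unfolding A_def by auto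
    have "z1 \<in> W1 \<inter> Z closure_of ((\<lambda>k. act k z0) ` carrier K)" using W(3) z1 dense by simp
    then have "z1 \<in> Z closure_of ((\<lambda>k. act k z0) ` A)"
      using openin_Int_closure_of_subset[OF W(1)] unfolding AO by blast
    then have "A \<in> F z1" unfolding F_def A_def by auto
    then have "A \<in> F z2" using eq by simp
    then have z2c: "z2 \<in> Z closure_of ((\<lambda>k. act k z0) ` A)" unfolding F_def by simp
    have "W2 \<inter> (\<lambda>k. act k z0) ` A = {}" using W(5) unfolding A_def disjnt_def by auto
    then have "W2 \<inter> Z closure_of ((\<lambda>k. act k z0) ` A) = {}"
      using openin_Int_closure_of_eq_empty[OF W(2)] by blast
    then show False using z2c W(4) by blast
  qed
  define actY where "actY k y = F (act k (inv_into (topspace Z) F y))" for k y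
  have iv: "\<And>x. x \<in> topspace Z \<Longrightarrow> inv_into (topspace Z) F (F x) = x"
    using inj by (rule inv_into_f_f)
  have Haus: "Hausdorff_space (img_top Z F)"
    unfolding Hausdorff_space_def topspace_img
  proof (intro allI impI)
    fix y1 y2 assume H: "y1 \<in> F ` topspace Z \<and> y2 \<in> F ` topspace Z \<and> y1 \<noteq> y2"
    then obtain z1 z2 where z: "z1 \<in> topspace Z" "z2 \<in> topspace Z" "y1 = F z1" "y2 = F z2" by blast
    then have "z1 \<noteq> z2" using H by blast
    then obtain W1 W2 where W: "openin Z W1" "openin Z W2" "z1 \<in> W1" "z2 \<in> W2" "disjnt W1 W2"
      using HZ z unfolding Hausdorff_space_def by blast
    have op: "openin (img_top Z F) (F ` W)" if "openin Z W" for W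
      unfolding openin_img
    proof
      have WZ: "W \<subseteq> topspace Z" using openin_subset[OF that] .
      then show "F ` W \<subseteq> F ` topspace Z" by blast
      have "{x \<in> topspace Z. F x \<in> F ` W} = W"
        using WZ inj unfolding inj_on_def by blast
      then show "openin Z {x \<in> topspace Z. F x \<in> F ` W}" using that by simp
    qed
    have "disjnt (F ` W1) (F ` W2)"
      using W(5) openin_subset[OF W(1)] openin_subset[OF W(2)] inj unfolding disjnt_def inj_on_def by blast
    then show "\<exists>U V. openin (img_top Z F) U \<and> openin (img_top Z F) V \<and> y1 \<in> U \<and> y2 \<in> V \<and> disjnt U V"
      using op[OF W(1)] op[OF W(2)] z W by blast
  qed
  have FY: "G_flow K (img_top Z F) actY"
  proof (rule img_flow[OF FL grp Haus])
    show "\<forall>k\<in>carrier K. \<exists>g\<in>carrier K. \<forall>x\<in>topspace Z. F (act g x) = actY k (F x)"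
      unfolding actY_def using iv by auto
    show "\<forall>x\<in>topspace Z. actY \<one>\<^bsub>K\<^esub> (F x) = F x"
      unfolding actY_def using iv act_one[OF FL] by auto
    show "\<forall>k1\<in>carrier K. \<forall>k2\<in>carrier K. \<forall>x\<in>topspace Z. actY (k1 \<otimes>\<^bsub>K\<^esub> k2) (F x) = actY k1 (actY k2 (F x))"
      unfolding actY_def using iv act_mult[OF FL] act_in[OF FL] by auto
  qed
  have "minimal_flow K (img_top Z F) actY"
  proof (rule img_minimal[OF M FY])
    show "\<forall>g\<in>carrier K. \<exists>k\<in>carrier K. \<forall>x\<in>topspace Z. F (act g x) = actY k (F x)"
      unfolding actY_def using iv by auto
  qed
  then show ?thesis using inj unfolding actY_def by blast
qed

definition orb :: "'g set \<Rightarrow> ('g \<Rightarrow> 'b \<Rightarrow> 'b) \<Rightarrow> 'b \<Rightarrow> 'b set" where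
  "orb N act x = (\<lambda>n. act n x) ` N"

definition qact :: "('g \<Rightarrow> 'b \<Rightarrow> 'b) \<Rightarrow> 'g set \<Rightarrow> 'b set \<Rightarrow> 'b set" where
  "qact act c S = (\<Union>a\<in>c. act a ` S)"

context
  fixes G :: "('g, 'm) monoid_scheme" and N :: "'g set" and X :: "'b topology" and act :: "'g \<Rightarrow> 'b \<Rightarrow> 'b"
  assumes nG: "N \<lhd> G" and F: "G_flow G X act"
begin

interpretation normal N G by (rule nG)

lemma sgN: "subgroup N G" using nG by (rule normal_imp_subgroup)

lemma Nc: "n \<in> N \<Longrightarrow> n \<in> carrier G"
  using subset by blast

lemma orb_sub: "x \<in> topspace X \<Longrightarrow> orb N act x \<subseteq> topspace X"
  unfolding orb_def using act_in[OF F Nc] by blast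

lemma orb_self: "x \<in> topspace X \<Longrightarrow> x \<in> orb N act x"
  unfolding orb_def using act_one[OF F] subgroup.one_closed[OF sgN] by (metis image_eqI)

lemma orb_act: assumes x: "x \<in> topspace X" and n: "n \<in> N" shows "orb N act (act n x) = orb N act x"
proof
  show "orb N act (act n x) \<subseteq> orb N act x"
  proof
    fix y assume "y \<in> orb N act (act n x)"
    then obtain m where m: "m \<in> N" "y = act m (act n x)" unfolding orb_def by blast
    have "y = act (m \<otimes>\<^bsub>G\<^esub> n) x" using act_mult[OF F Nc[OF m(1)] Nc[OF n] x] m by simp
    moreover have "m \<otimes>\<^bsub>G\<^esub> n \<in> N" using m(1) n by (rule subgroup.m_closed[OF sgN])
    ultimately show "y \<in> orb N act x" unfolding orb_def by blast
  qed
  show "orb N act x \<subseteq> orb N act (act n x)"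
  proof
    fix y assume "y \<in> orb N act x"
    then obtain m where m: "m \<in> N" "y = act m x" unfolding orb_def by blast
    have mc: "m \<in> carrier G" and nc: "n \<in> carrier G" using m(1) n by (auto intro: Nc)
    have "m = (m \<otimes>\<^bsub>G\<^esub> inv\<^bsub>G\<^esub> n) \<otimes>\<^bsub>G\<^esub> n" using mc nc by (simp add: m_assoc)
    then have "y = act ((m \<otimes>\<^bsub>G\<^esub> inv\<^bsub>G\<^esub> n) \<otimes>\<^bsub>G\<^esub> n) x" using m by simp
    also have "\<dots> = act (m \<otimes>\<^bsub>G\<^esub> inv\<^bsub>G\<^esub> n) (act n x)" using act_mult[OF F _ nc x] mc nc by simp
    finally have "y = act (m \<otimes>\<^bsub>G\<^esub> inv\<^bsub>G\<^esub> n) (act n x)" .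
    moreover have "m \<otimes>\<^bsub>G\<^esub> inv\<^bsub>G\<^esub> n \<in> N" using m(1) n by (simp add: subgroup.m_closed[OF sgN] subgroup.m_inv_closed[OF sgN])
    ultimately show "y \<in> orb N act (act n x)" unfolding orb_def by blast
  qed
qed

lemma orb_mem_eq: "x \<in> topspace X \<Longrightarrow> y \<in> orb N act x \<Longrightarrow> orb N act y = orb N act x"
  unfolding orb_def using orb_act[unfolded orb_def] by blast

lemma orb_cases: "x \<in> topspace X \<Longrightarrow> y \<in> topspace X \<Longrightarrow> orb N act x = orb N act y \<Longrightarrow> \<exists>n\<in>N. y = act n x"
  using orb_self[of y] unfolding orb_def by auto

lemma qact_orb: assumes g: "g \<in> carrier G" and x: "x \<in> topspace X"
  shows "qact act (N #>\<^bsub>G\<^esub> g) (orb N act x) = orb N act (act g x)"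
proof
  show "qact act (N #>\<^bsub>G\<^esub> g) (orb N act x) \<subseteq> orb N act (act g x)"
  proof
    fix y assume "y \<in> qact act (N #>\<^bsub>G\<^esub> g) (orb N act x)"
    then obtain m n where mn: "m \<in> N" "n \<in> N" "y = act (m \<otimes>\<^bsub>G\<^esub> g) (act n x)"
      unfolding qact_def orb_def r_coset_def by blast
    have mc: "m \<in> carrier G" and nc: "n \<in> carrier G" using mn by (auto intro: Nc)
    have c: "g \<otimes>\<^bsub>G\<^esub> n \<otimes>\<^bsub>G\<^esub> inv\<^bsub>G\<^esub> g \<in> N" using g mn(2) by (rule inv_op_closed2)
    have e: "m \<otimes>\<^bsub>G\<^esub> g \<otimes>\<^bsub>G\<^esub> n = (m \<otimes>\<^bsub>G\<^esub> (g \<otimes>\<^bsub>G\<^esub> n \<otimes>\<^bsub>G\<^esub> inv\<^bsub>G\<^esub> g)) \<otimes>\<^bsub>G\<^esub> g" using mc nc g by (simp add: m_assoc)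
    have "y = act (m \<otimes>\<^bsub>G\<^esub> g \<otimes>\<^bsub>G\<^esub> n) x" using act_mult[OF F _ nc x] mc g mn(3) by simp
    also have "\<dots> = act (m \<otimes>\<^bsub>G\<^esub> (g \<otimes>\<^bsub>G\<^esub> n \<otimes>\<^bsub>G\<^esub> inv\<^bsub>G\<^esub> g)) (act g x)" unfolding e
      using act_mult[OF F _ g x] mc nc g by simp
    finally show "y \<in> orb N act (act g x)" unfolding orb_def using subgroup.m_closed[OF sgN mn(1) c] by blast
  qed
  show "orb N act (act g x) \<subseteq> qact act (N #>\<^bsub>G\<^esub> g) (orb N act x)"
  proof
    fix y assume "y \<in> orb N act (act g x)"
    then obtain n where n: "n \<in> N" "y = act n (act g x)" unfolding orb_def by blast
    have "y = act (n \<otimes>\<^bsub>G\<^esub> g) x" using act_mult[OF F Nc[OF n(1)] g x] n by simp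
    moreover have "n \<otimes>\<^bsub>G\<^esub> g \<in> N #>\<^bsub>G\<^esub> g" unfolding r_coset_def using n(1) by blast
    moreover have "x \<in> orb N act x" using orb_self[OF x] .
    ultimately show "y \<in> qact act (N #>\<^bsub>G\<^esub> g) (orb N act x)" unfolding qact_def by blast
  qed
qed

lemma orb_disj: "x \<in> topspace X \<Longrightarrow> y \<in> topspace X \<Longrightarrow> orb N act x \<noteq> orb N act y \<Longrightarrow> orb N act x \<inter> orb N act y = {}"
  using orb_mem_eq by blast

lemma sat_mem:
  assumes z: "z \<in> topspace X" and w: "w \<in> topspace X" and wU: "\<forall>n\<in>N. act n w \<in> U"
    and eq: "orb N act z = orb N act w"
  shows "\<forall>n\<in>N. act n z \<in> U"
proof
  fix n assume n: "n \<in> N"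
  obtain m where m: "m \<in> N" "z = act m w" using orb_cases[OF w z] eq by metis
  have "act n z = act (n \<otimes>\<^bsub>G\<^esub> m) w" using act_mult[OF F Nc[OF n] Nc[OF m(1)] w] m by simp
  moreover have "n \<otimes>\<^bsub>G\<^esub> m \<in> N" using n m(1) by (rule subgroup.m_closed[OF sgN])
  ultimately show "act n z \<in> U" using wU by simp
qed

lemma quot_open:
  assumes U: "openin X U"
  shows "openin (img_top X (orb N act)) (orb N act ` U)"
  unfolding openin_img
proof
  have UX: "U \<subseteq> topspace X" using openin_subset[OF U] .
  then show "orb N act ` U \<subseteq> orb N act ` topspace X" by blast
  have "{x \<in> topspace X. orb N act x \<in> orb N act ` U} = (\<Union>n\<in>N. {x \<in> topspace X. act n x \<in> U})"
  proof
    show "{x \<in> topspace X. orb N act x \<in> orb N act ` U} \<subseteq> (\<Union>n\<in>N. {x \<in> topspace X. act n x \<in> U})"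
    proof
      fix x assume "x \<in> {x \<in> topspace X. orb N act x \<in> orb N act ` U}"
      then obtain u where u: "x \<in> topspace X" "u \<in> U" "orb N act x = orb N act u" by blast
      obtain n where "n \<in> N" "u = act n x" using orb_cases[OF u(1)] u UX by blast
      then show "x \<in> (\<Union>n\<in>N. {x \<in> topspace X. act n x \<in> U})" using u by blast
    qed
    show "(\<Union>n\<in>N. {x \<in> topspace X. act n x \<in> U}) \<subseteq> {x \<in> topspace X. orb N act x \<in> orb N act ` U}"
    proof
      fix x assume "x \<in> (\<Union>n\<in>N. {x \<in> topspace X. act n x \<in> U})"
      then obtain n where n: "n \<in> N" "x \<in> topspace X" "act n x \<in> U" by blast
      have "orb N act (act n x) = orb N act x" using orb_act[OF n(2) n(1)] .
      then show "x \<in> {x \<in> topspace X. orb N act x \<in> orb N act ` U}" using n by (metis (mono_tags, lifting) image_eqI mem_Collect_eq)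
    qed
  qed
  moreover have "openin X (\<Union>n\<in>N. {x \<in> topspace X. act n x \<in> U})"
    using preimage_open[OF F Nc U] by blast
  ultimately show "openin X {x \<in> topspace X. orb N act x \<in> orb N act ` U}" by simp
qed

lemma quot_Hausdorff:
  assumes fin: "finite N"
  shows "Hausdorff_space (img_top X (orb N act))"
  unfolding Hausdorff_space_def topspace_img
proof (intro allI impI)
  have HX: "Hausdorff_space X" using F by (simp add: G_flow_def)
  fix p q assume H: "p \<in> orb N act ` topspace X \<and> q \<in> orb N act ` topspace X \<and> p \<noteq> q"
  then obtain x y where xy: "x \<in> topspace X" "y \<in> topspace X" "p = orb N act x" "q = orb N act y" by blast
  have fo: "finite (orb N act z)" for z unfolding orb_def using fin by simp
  have "compactin X (orb N act x)" "compactin X (orb N act y)"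
    using finite_imp_compactin[OF orb_sub fo] xy by auto
  moreover have "disjnt (orb N act x) (orb N act y)" using orb_disj xy H unfolding disjnt_def by blast
  ultimately obtain U1 U2 where U: "openin X U1" "openin X U2" "orb N act x \<subseteq> U1" "orb N act y \<subseteq> U2" "disjnt U1 U2"
    using HX unfolding Hausdorff_space_compact_sets by metis
  define W where "W U = {z \<in> topspace X. \<forall>n\<in>N. act n z \<in> U}" for U
  have Wopen: "openin X (W U)" if "openin X U" for U
  proof -
    have "W U = (\<Inter>n\<in>N. {z \<in> topspace X. act n z \<in> U}) \<inter> topspace X" unfolding W_def by auto
    then show ?thesis using openin_INT[OF fin preimage_open[OF F Nc that]] by simp
  qed
  have op: "openin (img_top X (orb N act)) (orb N act ` W U)" if "openin X U" for U
    unfolding openin_img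
  proof
    show "orb N act ` W U \<subseteq> orb N act ` topspace X" unfolding W_def by blast
    have "{z \<in> topspace X. orb N act z \<in> orb N act ` W U} = W U"
    proof
      show "{z \<in> topspace X. orb N act z \<in> orb N act ` W U} \<subseteq> W U"
      proof
        fix z assume "z \<in> {z \<in> topspace X. orb N act z \<in> orb N act ` W U}"
        then obtain w where w: "z \<in> topspace X" "w \<in> W U" "orb N act z = orb N act w" by blast
        then have "\<forall>n\<in>N. act n z \<in> U" using sat_mem[OF w(1)] unfolding W_def by blast
        then show "z \<in> W U" unfolding W_def using w(1) by blast
      qed
      show "W U \<subseteq> {z \<in> topspace X. orb N act z \<in> orb N act ` W U}" unfolding W_def by blast
    qed
    then show "openin X {z \<in> topspace X. orb N act z \<in> orb N act ` W U}" using Wopen[OF that] by simp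
  qed
  have xW: "x \<in> W U1" unfolding W_def using xy(1) U(3) unfolding orb_def by blast
  have yW: "y \<in> W U2" unfolding W_def using xy(2) U(4) unfolding orb_def by blast
  have one: "\<one>\<^bsub>G\<^esub> \<in> N" by (rule subgroup.one_closed[OF sgN])
  have dj: "disjnt (orb N act ` W U1) (orb N act ` W U2)"
    unfolding disjnt_def
  proof (rule ccontr)
    assume "orb N act ` W U1 \<inter> orb N act ` W U2 \<noteq> {}"
    then obtain w1 w2 where w: "w1 \<in> W U1" "w2 \<in> W U2" "orb N act w1 = orb N act w2" by blast
    have "w1 \<in> W U2" using sat_mem[of w1 w2 U2] w unfolding W_def by blast
    then have "act \<one>\<^bsub>G\<^esub> w1 \<in> U1 \<inter> U2" using w(1) one unfolding W_def by blast
    then show False using U(5) unfolding disjnt_def by blast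
  qed
  show "\<exists>U V. openin (img_top X (orb N act)) U \<and> openin (img_top X (orb N act)) V \<and> p \<in> U \<and> q \<in> V \<and> disjnt U V"
    using op[OF U(1)] op[OF U(2)] xW yW dj xy by blast
qed

lemma quot_minimal:
  assumes fin: "finite N" and M: "minimal_flow G X act"
  shows "minimal_flow (G Mod N) (img_top X (orb N act)) (qact act)"
proof -
  have grpH: "group (G Mod N)" by (rule factorgroup_is_group)
  have car: "carrier (G Mod N) = (\<lambda>g. N #>\<^bsub>G\<^esub> g) ` carrier G" by (rule carrier_FactGroup)
  have FY: "G_flow (G Mod N) (img_top X (orb N act)) (qact act)"
  proof (rule img_flow[OF F grpH quot_Hausdorff[OF fin]])
    show "\<forall>k\<in>carrier (G Mod N). \<exists>g\<in>carrier G. \<forall>x\<in>topspace X. orb N act (act g x) = qact act k (orb N act x)"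
      unfolding car using qact_orb by auto
    have "N #>\<^bsub>G\<^esub> \<one>\<^bsub>G\<^esub> = N" using coset_mult_one[OF subset] .
    then show "\<forall>x\<in>topspace X. qact act \<one>\<^bsub>G Mod N\<^esub> (orb N act x) = orb N act x"
      using qact_orb[OF one_closed] act_one[OF F] by (metis one_FactGroup)
    show "\<forall>k1\<in>carrier (G Mod N). \<forall>k2\<in>carrier (G Mod N). \<forall>x\<in>topspace X.
        qact act (k1 \<otimes>\<^bsub>G Mod N\<^esub> k2) (orb N act x) = qact act k1 (qact act k2 (orb N act x))"
    proof (intro ballI)
      fix k1 k2 x assume k1: "k1 \<in> carrier (G Mod N)" and k2: "k2 \<in> carrier (G Mod N)" and x: "x \<in> topspace X"
      obtain g1 where g1: "g1 \<in> carrier G" "k1 = N #>\<^bsub>G\<^esub> g1" using k1 unfolding car by blast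
      obtain g2 where g2: "g2 \<in> carrier G" "k2 = N #>\<^bsub>G\<^esub> g2" using k2 unfolding car by blast
      have "k1 \<otimes>\<^bsub>G Mod N\<^esub> k2 = N #>\<^bsub>G\<^esub> (g1 \<otimes>\<^bsub>G\<^esub> g2)" using rcos_sum[OF g1(1) g2(1)] g1 g2 by simp
      then have "qact act (k1 \<otimes>\<^bsub>G Mod N\<^esub> k2) (orb N act x) = orb N act (act (g1 \<otimes>\<^bsub>G\<^esub> g2) x)"
        using qact_orb[OF m_closed[OF g1(1) g2(1)] x] by simp
      also have "\<dots> = orb N act (act g1 (act g2 x))" using act_mult[OF F g1(1) g2(1) x] by simp
      also have "\<dots> = qact act k1 (qact act k2 (orb N act x))"
        using qact_orb[OF g2(1) x] qact_orb[OF g1(1) act_in[OF F g2(1) x]] g1 g2 by simp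
      finally show "qact act (k1 \<otimes>\<^bsub>G Mod N\<^esub> k2) (orb N act x) = qact act k1 (qact act k2 (orb N act x))" .
    qed
  qed
  show ?thesis
  proof (rule img_minimal[OF M FY])
    show "\<forall>g\<in>carrier G. \<exists>k\<in>carrier (G Mod N). \<forall>x\<in>topspace X. orb N act (act g x) = qact act k (orb N act x)"
      unfolding car using qact_orb by auto
  qed
qed

end

lemma solve_eq:
  assumes grp: "group G" and c: "d \<in> carrier G" "d' \<in> carrier G" "g \<in> carrier G" "k \<in> carrier G"
    and eq: "d \<otimes>\<^bsub>G\<^esub> g = d' \<otimes>\<^bsub>G\<^esub> k"
  shows "g = inv\<^bsub>G\<^esub> d \<otimes>\<^bsub>G\<^esub> d' \<otimes>\<^bsub>G\<^esub> k"
proof -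
  interpret group G by (rule grp)
  have "inv\<^bsub>G\<^esub> d \<otimes>\<^bsub>G\<^esub> d' \<otimes>\<^bsub>G\<^esub> k = inv\<^bsub>G\<^esub> d \<otimes>\<^bsub>G\<^esub> (d' \<otimes>\<^bsub>G\<^esub> k)" using c by (simp add: m_assoc)
  also have "\<dots> = inv\<^bsub>G\<^esub> d \<otimes>\<^bsub>G\<^esub> (d \<otimes>\<^bsub>G\<^esub> g)" using eq by simp
  also have "\<dots> = g" using c by (simp add: m_assoc[symmetric])
  finally show ?thesis by simp
qed

lemma choose_h:
  assumes M: "minimal_flow G X act" and inf: "infinite (carrier G)"
    and U: "openin X U" "U \<noteq> {}" and D: "finite D" "D \<subseteq> carrier G"
    and N: "finite N" "N \<subseteq> carrier G" and x0: "x0 \<in> topspace X"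
  shows "\<exists>h. \<forall>n\<in>N. h n \<in> carrier G \<and> act (h n) (act n x0) \<in> U \<and>
            (\<forall>m\<in>N. m \<noteq> n \<longrightarrow> (\<forall>d\<in>D. \<forall>d'\<in>D. d \<otimes>\<^bsub>G\<^esub> h n \<noteq> d' \<otimes>\<^bsub>G\<^esub> h m))"
proof -
  have F: "G_flow G X act" using M by (rule minimal_flow_flow)
  have grp: "group G" using F by (rule flow_group)
  interpret group G by (rule grp)
  define Q where "Q M h \<longleftrightarrow> (\<forall>n\<in>M. h n \<in> carrier G \<and> act (h n) (act n x0) \<in> U \<and>
            (\<forall>m\<in>M. m \<noteq> n \<longrightarrow> (\<forall>d\<in>D. \<forall>d'\<in>D. d \<otimes>\<^bsub>G\<^esub> h n \<noteq> d' \<otimes>\<^bsub>G\<^esub> h m)))" for M h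
  have "M \<subseteq> N \<Longrightarrow> \<exists>h. Q M h" if "finite M" for M
    using that
  proof (induction M rule: finite_induct)
    case empty
    then show ?case unfolding Q_def by simp
  next
    case (insert a M)
    then obtain h where h: "Q M h" by blast
    have ac: "a \<in> carrier G" using insert N by blast
    have y: "act a x0 \<in> topspace X" using act_in[OF F ac x0] .
    have Rinf: "infinite {g \<in> carrier G. act g (act a x0) \<in> U}"
      by (rule return_infinite[OF M inf U y])
    define B where "B = (\<lambda>(d, d', m). inv\<^bsub>G\<^esub> d \<otimes>\<^bsub>G\<^esub> d' \<otimes>\<^bsub>G\<^esub> h m) ` (D \<times> D \<times> M)"
    have Bfin: "finite B" unfolding B_def using D(1) insert(1) by simp
    have "infinite ({g \<in> carrier G. act g (act a x0) \<in> U} - B)" using Diff_infinite_finite[OF Bfin Rinf] .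
    then have "{g \<in> carrier G. act g (act a x0) \<in> U} - B \<noteq> {}" by (metis finite.emptyI)
    then obtain g where "g \<in> {g \<in> carrier G. act g (act a x0) \<in> U} - B" by blast
    then have g: "g \<in> carrier G" "act g (act a x0) \<in> U" "g \<notin> B" by auto
    define h' where "h' = h(a := g)"
    have hM: "\<forall>n\<in>M. h' n = h n" unfolding h'_def using insert(2) by auto
    have ha: "h' a = g" unfolding h'_def by simp
    have hc: "\<forall>n\<in>M. h n \<in> carrier G" using h unfolding Q_def by blast
    have notB: False if "d \<in> D" "d' \<in> D" "m \<in> M" "d \<otimes>\<^bsub>G\<^esub> g = d' \<otimes>\<^bsub>G\<^esub> h m" for d d' m
    proof -
      have "g = inv\<^bsub>G\<^esub> d \<otimes>\<^bsub>G\<^esub> d' \<otimes>\<^bsub>G\<^esub> h m"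
        using solve_eq[OF grp _ _ g(1) _ that(4)] that(1,2,3) D(2) hc by blast
      then have "g \<in> B" unfolding B_def using that(1,2,3) by force
      then show False using g(3) by simp
    qed
    have "Q (insert a M) h'" unfolding Q_def
    proof
      fix n assume n: "n \<in> insert a M"
      show "h' n \<in> carrier G \<and> act (h' n) (act n x0) \<in> U \<and>
            (\<forall>m\<in>insert a M. m \<noteq> n \<longrightarrow> (\<forall>d\<in>D. \<forall>d'\<in>D. d \<otimes>\<^bsub>G\<^esub> h' n \<noteq> d' \<otimes>\<^bsub>G\<^esub> h' m))"
      proof (cases "n = a")
        case True
        have "\<forall>m\<in>insert a M. m \<noteq> n \<longrightarrow> (\<forall>d\<in>D. \<forall>d'\<in>D. d \<otimes>\<^bsub>G\<^esub> h' n \<noteq> d' \<otimes>\<^bsub>G\<^esub> h' m)"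
          using notB True ha hM by auto
        then show ?thesis using True ha g by simp
      next
        case False
        then have nM: "n \<in> M" using n by simp
        have p: "h n \<in> carrier G \<and> act (h n) (act n x0) \<in> U \<and>
            (\<forall>m\<in>M. m \<noteq> n \<longrightarrow> (\<forall>d\<in>D. \<forall>d'\<in>D. d \<otimes>\<^bsub>G\<^esub> h n \<noteq> d' \<otimes>\<^bsub>G\<^esub> h m))"
          using h nM unfolding Q_def by blast
        have "\<forall>d\<in>D. \<forall>d'\<in>D. d \<otimes>\<^bsub>G\<^esub> h n \<noteq> d' \<otimes>\<^bsub>G\<^esub> g"
        proof (intro ballI notI)
          fix d d' assume dd: "d \<in> D" "d' \<in> D" "d \<otimes>\<^bsub>G\<^esub> h n = d' \<otimes>\<^bsub>G\<^esub> g"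
          then have "d' \<otimes>\<^bsub>G\<^esub> g = d \<otimes>\<^bsub>G\<^esub> h n" by simp
          then show False using notB dd(1,2) nM by blast
        qed
        then show ?thesis using p hM nM ha by auto
      qed
    qed
    then show ?case by blast
  qed
  then obtain h where "Q N h" using N by blast
  then show ?thesis unfolding Q_def by blast
qed

theorem lemma6p3:
  fixes G :: "('g, 'm) monoid_scheme" and N :: "'g set"
    and XH :: "'a topology" and actH :: "'g set \<Rightarrow> 'a \<Rightarrow> 'a"
    and XG :: "'b topology" and actG :: "'g \<Rightarrow> 'b \<Rightarrow> 'b"
  assumes "group G"
    and "countable (carrier G)" and "infinite (carrier G)"
    and "N \<lhd> G" and "finite N"
    and "universal_minimal_flow (G Mod N) XH actH"
    and "separated_covering_property (G Mod N) XH actH"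
    and "universal_minimal_flow G XG actG"
  shows "separated_covering_property G XG actG"
proof -
  note grp = assms(1) and inf = assms(3) and nG = assms(4) and finN = assms(5)
  have MG: "minimal_flow G XG actG" using assms(8) unfolding universal_minimal_flow_def by simp
  have FG: "G_flow G XG actG" using MG by (rule minimal_flow_flow)
  have sg: "subgroup N G" using nG by (rule normal_imp_subgroup)
  have NG: "N \<subseteq> carrier G" using sg by (rule subgroup.subset)
  interpret N: normal N G by (rule nG)
  define Z where "Z = img_top XG (orb N actG)"
  define actZ where "actZ = qact actG"
  have MZ: "minimal_flow (G Mod N) Z actZ" unfolding Z_def actZ_def by (rule quot_minimal[OF nG FG finN MG])
  obtain Fm :: "'b set \<Rightarrow> 'g set set set" where injF: "inj_on Fm (topspace Z)"
    and MY: "minimal_flow (G Mod N) (img_top Z Fm) (\<lambda>k y. Fm (actZ k (inv_into (topspace Z) Fm y)))"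
    using transfer[OF MZ] by blast
  define Y where "Y = img_top Z Fm"
  define actY where "actY = (\<lambda>k y. Fm (actZ k (inv_into (topspace Z) Fm y)))"
  obtain \<psi> where \<psi>: "equivariant_factor_map (G Mod N) XH actH Y actY \<psi>"
    using assms(6) MY unfolding universal_minimal_flow_def Y_def actY_def by blast
  have \<psi>c: "continuous_map XH Y \<psi>" and \<psi>s: "\<psi> ` topspace XH = topspace Y"
    and \<psi>e: "\<forall>g\<in>carrier (G Mod N). \<forall>x\<in>topspace XH. \<psi> (actH g x) = actY g (\<psi> x)"
    using \<psi> unfolding equivariant_factor_map_def by auto
  have tZ: "topspace Z = orb N actG ` topspace XG" unfolding Z_def by (rule topspace_img)
  have tY: "topspace Y = Fm ` topspace Z" unfolding Y_def by (rule topspace_img)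
  have iv: "\<And>z. z \<in> topspace Z \<Longrightarrow> inv_into (topspace Z) Fm (Fm z) = z"
    using injF by (rule inv_into_f_f)
  have car: "carrier (G Mod N) = (\<lambda>g. N #>\<^bsub>G\<^esub> g) ` carrier G" by (rule carrier_FactGroup)
  show ?thesis unfolding separated_covering_property_def
  proof (intro allI impI)
    fix D U assume DU: "finite D \<and> D \<subseteq> carrier G \<and> openin XG U \<and> U \<noteq> {}"
    then have D: "finite D" "D \<subseteq> carrier G" and U: "openin XG U" "U \<noteq> {}" by auto
    obtain x0 where x0U: "x0 \<in> U" using U(2) by blast
    have x0: "x0 \<in> topspace XG" using x0U openin_subset[OF U(1)] by blast
    obtain h where h: "\<forall>n\<in>N. h n \<in> carrier G \<and> actG (h n) (actG n x0) \<in> U \<and>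
            (\<forall>m\<in>N. m \<noteq> n \<longrightarrow> (\<forall>d\<in>D. \<forall>d'\<in>D. d \<otimes>\<^bsub>G\<^esub> h n \<noteq> d' \<otimes>\<^bsub>G\<^esub> h m))"
      using choose_h[OF MG inf U D finN NG x0] by blast
    have hc: "\<And>n. n \<in> N \<Longrightarrow> h n \<in> carrier G" using h by blast
    have aN: "\<And>n y. n \<in> N \<Longrightarrow> y \<in> topspace XG \<Longrightarrow> actG n y \<in> topspace XG"
      using act_in[OF FG subsetD[OF NG]] by blast
    define U' where "U' = {y \<in> topspace XG. \<forall>n\<in>N. actG (h n) (actG n y) \<in> U}"
    have U'o: "openin XG U'"
    proof -
      have "U' = (\<Inter>n\<in>N. {y \<in> topspace XG. actG n y \<in> {z \<in> topspace XG. actG (h n) z \<in> U}}) \<inter> topspace XG"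
      proof (rule Set.set_eqI)
        fix y
        show "y \<in> U' \<longleftrightarrow> y \<in> (\<Inter>n\<in>N. {y \<in> topspace XG. actG n y \<in> {z \<in> topspace XG. actG (h n) z \<in> U}}) \<inter> topspace XG"
        proof (cases "y \<in> topspace XG")
          case True
          then show ?thesis unfolding U'_def using aN[OF _ True] by simp
        next
          case False
          then show ?thesis unfolding U'_def by simp
        qed
      qed
      moreover have "openin XG ((\<Inter>n\<in>N. {y \<in> topspace XG. actG n y \<in> {z \<in> topspace XG. actG (h n) z \<in> U}}) \<inter> topspace XG)"
      proof (rule openin_INT[OF finN])
        fix n assume n: "n \<in> N"
        show "openin XG {y \<in> topspace XG. actG n y \<in> {z \<in> topspace XG. actG (h n) z \<in> U}}"
          by (rule preimage_open[OF FG subsetD[OF NG n] preimage_open[OF FG hc[OF n] U(1)]])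
      qed
      ultimately show ?thesis by simp
    qed
    have x0U': "x0 \<in> U'" unfolding U'_def using x0 h by blast
    define V0 where "V0 = Fm ` (orb N actG ` U')"
    have U'X: "U' \<subseteq> topspace XG" unfolding U'_def by blast
    have V0o: "openin Y V0" unfolding Y_def openin_img V0_def
    proof
      show "Fm ` orb N actG ` U' \<subseteq> Fm ` topspace Z" unfolding tZ using U'X by blast
      have "{z \<in> topspace Z. Fm z \<in> Fm ` orb N actG ` U'} = orb N actG ` U'"
        using injF U'X unfolding tZ inj_on_def by blast
      moreover have "openin Z (orb N actG ` U')" unfolding Z_def by (rule quot_open[OF nG FG U'o])
      ultimately show "openin Z {z \<in> topspace Z. Fm z \<in> Fm ` orb N actG ` U'}" by simp
    qed
    define V where "V = {v \<in> topspace XH. \<psi> v \<in> V0}"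
    have Vo: "openin XH V" unfolding V_def by (rule openin_continuous_map_preimage[OF \<psi>c V0o])
    have "Fm (orb N actG x0) \<in> topspace Y" unfolding tY tZ using x0 by blast
    then obtain v0 where "v0 \<in> topspace XH" "\<psi> v0 = Fm (orb N actG x0)" using \<psi>s by (metis imageE)
    then have Vne: "V \<noteq> {}" unfolding V_def V0_def using x0U' by blast
    define E where "E = (\<lambda>g. N #>\<^bsub>G\<^esub> g) ` ((\<lambda>(d, n). d \<otimes>\<^bsub>G\<^esub> h n) ` (D \<times> N))"
    have Efin: "finite E" unfolding E_def using D(1) finN by simp
    have Ec: "E \<subseteq> carrier (G Mod N)"
    proof
      fix c assume "c \<in> E"
      then obtain d n where dn: "d \<in> D" "n \<in> N" "c = N #>\<^bsub>G\<^esub> (d \<otimes>\<^bsub>G\<^esub> h n)" unfolding E_def by auto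
      have dc: "d \<in> carrier G" using D(2) dn(1) by blast
      have "d \<otimes>\<^bsub>G\<^esub> h n \<in> carrier G" using monoid.m_closed[OF N.is_monoid dc hc[OF dn(2)]] .
      then show "c \<in> carrier (G Mod N)" unfolding car using dn(3) by (rule rev_image_eqI)
    qed
    obtain SH where SH: "SH \<subseteq> carrier (G Mod N)" "D_separated (G Mod N) E SH"
      "(\<Union>s\<in>SH. actH (inv\<^bsub>G Mod N\<^esub> s) ` V) = topspace XH"
    proof -
      have "finite E \<and> E \<subseteq> carrier (G Mod N) \<and> openin XH V \<and> V \<noteq> {}" using Efin Ec Vo Vne by simp
      from assms(7)[unfolded separated_covering_property_def, rule_format, OF this] show ?thesis using that by blast
    qed
    have "\<forall>c\<in>SH. \<exists>s. s \<in> carrier G \<and> c = N #>\<^bsub>G\<^esub> s"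
    proof
      fix c assume "c \<in> SH"
      then have "c \<in> (\<lambda>g. N #>\<^bsub>G\<^esub> g) ` carrier G" using subsetD[OF SH(1)] unfolding car by simp
      then obtain s where "s \<in> carrier G" "c = N #>\<^bsub>G\<^esub> s" by (rule imageE)
      then show "\<exists>s. s \<in> carrier G \<and> c = N #>\<^bsub>G\<^esub> s" by (intro exI[of _ s] conjI)
    qed
    from bchoice[OF this] obtain lf where lf: "\<forall>c\<in>SH. lf c \<in> carrier G \<and> c = N #>\<^bsub>G\<^esub> lf c" by blast
    define T where "T = (\<lambda>(n, c). h n \<otimes>\<^bsub>G\<^esub> lf c) ` (N \<times> SH)"
    have Tc: "T \<subseteq> carrier G" unfolding T_def using hc lf by auto
    have Tsep: "D_separated G D T" unfolding D_separated_def
    proof (intro ballI impI)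
      fix t1 t2 assume t1: "t1 \<in> T" and t2: "t2 \<in> T" and ne: "t1 \<noteq> t2"
      obtain n1 c1 where a1: "n1 \<in> N" "c1 \<in> SH" "t1 = h n1 \<otimes>\<^bsub>G\<^esub> lf c1" using t1 unfolding T_def by auto
      obtain n2 c2 where a2: "n2 \<in> N" "c2 \<in> SH" "t2 = h n2 \<otimes>\<^bsub>G\<^esub> lf c2" using t2 unfolding T_def by auto
      show "(D #>\<^bsub>G\<^esub> t1) \<inter> (D #>\<^bsub>G\<^esub> t2) = {}"
      proof (rule ccontr)
        assume "(D #>\<^bsub>G\<^esub> t1) \<inter> (D #>\<^bsub>G\<^esub> t2) \<noteq> {}"
        then obtain z where z: "z \<in> D #>\<^bsub>G\<^esub> t1" "z \<in> D #>\<^bsub>G\<^esub> t2" by blast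
        obtain d1 where d1: "d1 \<in> D" "z = d1 \<otimes>\<^bsub>G\<^esub> t1" using z(1) unfolding r_coset_def by auto
        obtain d2 where d2: "d2 \<in> D" "z = d2 \<otimes>\<^bsub>G\<^esub> t2" using z(2) unfolding r_coset_def by auto
        have d1c: "d1 \<in> carrier G" using D(2) d1(1) by blast
        have d2c: "d2 \<in> carrier G" using D(2) d2(1) by blast
        have h1c: "h n1 \<in> carrier G" using hc[OF a1(1)] .
        have h2c: "h n2 \<in> carrier G" using hc[OF a2(1)] .
        have s1c: "lf c1 \<in> carrier G" using lf a1(2) by blast
        have s2c: "lf c2 \<in> carrier G" using lf a2(2) by blast
        have z1: "z = d1 \<otimes>\<^bsub>G\<^esub> h n1 \<otimes>\<^bsub>G\<^esub> lf c1" using d1(2) a1(3) d1c h1c s1c by (simp add: N.m_assoc)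
        have z2: "z = d2 \<otimes>\<^bsub>G\<^esub> h n2 \<otimes>\<^bsub>G\<^esub> lf c2" using d2(2) a2(3) d2c h2c s2c by (simp add: N.m_assoc)
        have dh1: "d1 \<otimes>\<^bsub>G\<^esub> h n1 \<in> carrier G" using N.m_closed[OF d1c h1c] .
        have dh2: "d2 \<otimes>\<^bsub>G\<^esub> h n2 \<in> carrier G" using N.m_closed[OF d2c h2c] .
        show False
        proof (cases "c1 = c2")
          case True
          then have "d1 \<otimes>\<^bsub>G\<^esub> h n1 \<otimes>\<^bsub>G\<^esub> lf c1 = d2 \<otimes>\<^bsub>G\<^esub> h n2 \<otimes>\<^bsub>G\<^esub> lf c1" using z1 z2 by simp
          then have eq: "d1 \<otimes>\<^bsub>G\<^esub> h n1 = d2 \<otimes>\<^bsub>G\<^esub> h n2" using N.right_cancel[OF s1c dh1 dh2] by simp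
          show False
          proof (cases "n1 = n2")
            case True
            then have "t1 = t2" using a1(3) a2(3) \<open>c1 = c2\<close> by simp
            then show False using ne by simp
          next
            case False
            have "\<forall>m\<in>N. m \<noteq> n1 \<longrightarrow> (\<forall>d\<in>D. \<forall>d'\<in>D. d \<otimes>\<^bsub>G\<^esub> h n1 \<noteq> d' \<otimes>\<^bsub>G\<^esub> h m)"
              using bspec[OF h a1(1)] by (rule conjunct2[OF conjunct2])
            moreover have "n2 \<noteq> n1" using False by simp
            ultimately have "d1 \<otimes>\<^bsub>G\<^esub> h n1 \<noteq> d2 \<otimes>\<^bsub>G\<^esub> h n2" using a2(1) d1(1) d2(1) by simp
            then show False using eq by simp
          qed
        next
          case False
          have dis: "(E #>\<^bsub>G Mod N\<^esub> c1) \<inter> (E #>\<^bsub>G Mod N\<^esub> c2) = {}"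
            using SH(2)[unfolded D_separated_def, rule_format, OF a1(2) a2(2) False] .
          have inE: "N #>\<^bsub>G\<^esub> (d \<otimes>\<^bsub>G\<^esub> h n) \<in> E" if "d \<in> D" "n \<in> N" for d n
          proof -
            have "(d, n) \<in> D \<times> N" using that by simp
            then have "d \<otimes>\<^bsub>G\<^esub> h n \<in> (\<lambda>(d, n). d \<otimes>\<^bsub>G\<^esub> h n) ` (D \<times> N)" by (rule rev_image_eqI) simp
            then show ?thesis unfolding E_def by (rule imageI)
          qed
          have e1: "N #>\<^bsub>G\<^esub> (d1 \<otimes>\<^bsub>G\<^esub> h n1) \<in> E" using inE d1(1) a1(1) by simp
          have e2: "N #>\<^bsub>G\<^esub> (d2 \<otimes>\<^bsub>G\<^esub> h n2) \<in> E" using inE d2(1) a2(1) by simp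
          have c1e: "c1 = N #>\<^bsub>G\<^esub> lf c1" using lf a1(2) by blast
          have c2e: "c2 = N #>\<^bsub>G\<^esub> lf c2" using lf a2(2) by blast
          have p1: "(N #>\<^bsub>G\<^esub> (d1 \<otimes>\<^bsub>G\<^esub> h n1)) \<otimes>\<^bsub>G Mod N\<^esub> c1 = N #>\<^bsub>G\<^esub> z"
            using N.rcos_sum[OF dh1 s1c] c1e z1 by simp
          have p2: "(N #>\<^bsub>G\<^esub> (d2 \<otimes>\<^bsub>G\<^esub> h n2)) \<otimes>\<^bsub>G Mod N\<^esub> c2 = N #>\<^bsub>G\<^esub> z"
            using N.rcos_sum[OF dh2 s2c] c2e z2 by simp
          have rc: "E #>\<^bsub>G Mod N\<^esub> c = (\<Union>e\<in>E. {e \<otimes>\<^bsub>G Mod N\<^esub> c})" for c by (rule r_coset_def)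
          have "N #>\<^bsub>G\<^esub> z \<in> E #>\<^bsub>G Mod N\<^esub> c1" unfolding rc
            by (rule UN_I[OF e1]) (simp only: p1 singleton_iff)
          moreover have "N #>\<^bsub>G\<^esub> z \<in> E #>\<^bsub>G Mod N\<^esub> c2" unfolding rc
            by (rule UN_I[OF e2]) (simp only: p2 singleton_iff)
          ultimately show False using dis by (metis IntI empty_iff)
        qed
      qed
    qed
    have Tcov: "(\<Union>s\<in>T. actG (inv\<^bsub>G\<^esub> s) ` U) = topspace XG"
    proof
      show "(\<Union>s\<in>T. actG (inv\<^bsub>G\<^esub> s) ` U) \<subseteq> topspace XG"
      proof
        fix y assume "y \<in> (\<Union>s\<in>T. actG (inv\<^bsub>G\<^esub> s) ` U)"
        then obtain t u where tu: "t \<in> T" "u \<in> U" "y = actG (inv\<^bsub>G\<^esub> t) u" by blast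
        have "inv\<^bsub>G\<^esub> t \<in> carrier G" using N.inv_closed subsetD[OF Tc tu(1)] by simp
        moreover have "u \<in> topspace XG" using tu(2) openin_subset[OF U(1)] by blast
        ultimately show "y \<in> topspace XG" using act_in[OF FG] tu(3) by simp
      qed
      show "topspace XG \<subseteq> (\<Union>s\<in>T. actG (inv\<^bsub>G\<^esub> s) ` U)"
      proof
        fix y assume y: "y \<in> topspace XG"
        have oy: "orb N actG y \<in> topspace Z" unfolding tZ using y by (rule imageI)
        have "Fm (orb N actG y) \<in> topspace Y" unfolding tY using oy by (rule imageI)
        then obtain z where z: "z \<in> topspace XH" "\<psi> z = Fm (orb N actG y)" using \<psi>s by (metis imageE)
        have "z \<in> (\<Union>s\<in>SH. actH (inv\<^bsub>G Mod N\<^esub> s) ` V)" using SH(3) z(1) by simp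
        then obtain c where c: "c \<in> SH" "z \<in> actH (inv\<^bsub>G Mod N\<^esub> c) ` V" by (rule UN_E)
        from c(2) obtain v where v: "v \<in> V" "z = actH (inv\<^bsub>G Mod N\<^esub> c) v" by (rule imageE) simp
        have vX: "v \<in> topspace XH" and vV0: "\<psi> v \<in> V0" using v(1) unfolding V_def by auto
        from vV0 obtain ou where ou1: "ou \<in> orb N actG ` U'" "\<psi> v = Fm ou" unfolding V0_def by (rule imageE) simp
        from ou1(1) obtain u where u0: "u \<in> U'" "ou = orb N actG u" by (rule imageE) simp
        have u: "u \<in> U'" "\<psi> v = Fm (orb N actG u)" using u0 ou1(2) by simp_all
        have uX: "u \<in> topspace XG" using u(1) U'X by blast
        have ou: "orb N actG u \<in> topspace Z" unfolding tZ using uX by (rule imageI)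
        define s where "s = lf c"
        have sc: "s \<in> carrier G" and ce: "c = N #>\<^bsub>G\<^esub> s" using lf c(1) unfolding s_def by auto
        have cc: "c \<in> carrier (G Mod N)" using SH(1) c(1) by blast
        have ic: "inv\<^bsub>G Mod N\<^esub> c = N #>\<^bsub>G\<^esub> inv\<^bsub>G\<^esub> s"
          using N.inv_FactGroup[OF cc] N.rcos_inv[OF sc] ce by simp
        have isc: "inv\<^bsub>G\<^esub> s \<in> carrier G" using N.inv_closed[OF sc] .
        have icc: "inv\<^bsub>G Mod N\<^esub> c \<in> carrier (G Mod N)" unfolding ic car using isc by (rule imageI)
        have "\<psi> z = actY (inv\<^bsub>G Mod N\<^esub> c) (\<psi> v)" using \<psi>e icc vX v(2) by simp
        also have "\<dots> = Fm (actZ (inv\<^bsub>G Mod N\<^esub> c) (orb N actG u))" unfolding actY_def u(2) iv[OF ou] ..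
        also have "\<dots> = Fm (orb N actG (actG (inv\<^bsub>G\<^esub> s) u))" unfolding actZ_def ic
          using qact_orb[OF nG FG isc uX] by simp
        finally have "Fm (orb N actG y) = Fm (orb N actG (actG (inv\<^bsub>G\<^esub> s) u))" using z(2) by simp
        moreover have au: "actG (inv\<^bsub>G\<^esub> s) u \<in> topspace XG" using act_in[OF FG isc uX] .
        moreover have "orb N actG (actG (inv\<^bsub>G\<^esub> s) u) \<in> topspace Z" unfolding tZ using au by (rule imageI)
        ultimately have "orb N actG y = orb N actG (actG (inv\<^bsub>G\<^esub> s) u)"
          using inj_onD[OF injF _ oy] by simp
        then have "\<exists>n\<in>N. y = actG n (actG (inv\<^bsub>G\<^esub> s) u)"
          using orb_cases[OF nG FG au y] by simp
        then obtain n where n: "n \<in> N" "y = actG n (actG (inv\<^bsub>G\<^esub> s) u)" by (rule bexE)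
        define n' where "n' = s \<otimes>\<^bsub>G\<^esub> n \<otimes>\<^bsub>G\<^esub> inv\<^bsub>G\<^esub> s"
        have n'N: "n' \<in> N" unfolding n'_def using N.inv_op_closed2[OF sc n(1)] .
        have nc: "n \<in> carrier G" using NG n(1) by blast
        have n'c: "n' \<in> carrier G" using NG n'N by blast
        have alg: "n \<otimes>\<^bsub>G\<^esub> inv\<^bsub>G\<^esub> s = inv\<^bsub>G\<^esub> s \<otimes>\<^bsub>G\<^esub> n'"
        proof -
          have "inv\<^bsub>G\<^esub> s \<otimes>\<^bsub>G\<^esub> n' = inv\<^bsub>G\<^esub> s \<otimes>\<^bsub>G\<^esub> (s \<otimes>\<^bsub>G\<^esub> (n \<otimes>\<^bsub>G\<^esub> inv\<^bsub>G\<^esub> s))"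
            unfolding n'_def using sc nc isc by (simp add: N.m_assoc)
          also have "\<dots> = (inv\<^bsub>G\<^esub> s \<otimes>\<^bsub>G\<^esub> s) \<otimes>\<^bsub>G\<^esub> (n \<otimes>\<^bsub>G\<^esub> inv\<^bsub>G\<^esub> s)"
            by (rule N.m_assoc[OF isc sc N.m_closed[OF nc isc], symmetric])
          also have "\<dots> = n \<otimes>\<^bsub>G\<^esub> inv\<^bsub>G\<^esub> s" using sc nc isc by simp
          finally show ?thesis by simp
        qed
        have "y = actG (n \<otimes>\<^bsub>G\<^esub> inv\<^bsub>G\<^esub> s) u" using act_mult[OF FG nc isc uX] n(2) by simp
        also have "\<dots> = actG (inv\<^bsub>G\<^esub> s) (actG n' u)" unfolding alg using act_mult[OF FG isc n'c uX] .
        finally have y1: "y = actG (inv\<^bsub>G\<^esub> s) (actG n' u)" .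
        define w where "w = actG (h n') (actG n' u)"
        have wU: "w \<in> U" using u(1) n'N unfolding U'_def w_def by blast
        have hn'c: "h n' \<in> carrier G" using hc[OF n'N] .
        have an'u: "actG n' u \<in> topspace XG" using act_in[OF FG n'c uX] .
        have "actG n' u = actG (inv\<^bsub>G\<^esub> (h n')) w" unfolding w_def using act_inv_act[OF FG hn'c an'u] by simp
        then have "y = actG (inv\<^bsub>G\<^esub> s) (actG (inv\<^bsub>G\<^esub> (h n')) w)" using y1 by simp
        also have "\<dots> = actG (inv\<^bsub>G\<^esub> s \<otimes>\<^bsub>G\<^esub> inv\<^bsub>G\<^esub> (h n')) w"
          using act_mult[OF FG isc N.inv_closed[OF hn'c] subsetD[OF openin_subset[OF U(1)] wU]] by simp
        also have "inv\<^bsub>G\<^esub> s \<otimes>\<^bsub>G\<^esub> inv\<^bsub>G\<^esub> (h n') = inv\<^bsub>G\<^esub> (h n' \<otimes>\<^bsub>G\<^esub> s)"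
          using N.inv_mult_group[OF hn'c sc] by simp
        finally have yw: "y = actG (inv\<^bsub>G\<^esub> (h n' \<otimes>\<^bsub>G\<^esub> lf c)) w" unfolding s_def .
        have "(n', c) \<in> N \<times> SH" using n'N c(1) by simp
        then have tT: "h n' \<otimes>\<^bsub>G\<^esub> lf c \<in> T" unfolding T_def by (rule rev_image_eqI) simp
        have "y \<in> actG (inv\<^bsub>G\<^esub> (h n' \<otimes>\<^bsub>G\<^esub> lf c)) ` U" using yw wU by (rule image_eqI)
        then show "y \<in> (\<Union>s\<in>T. actG (inv\<^bsub>G\<^esub> s) ` U)" by (rule UN_I[OF tT])
      qed
    qed
    show "\<exists>S. S \<subseteq> carrier G \<and> D_separated G D S \<and> (\<Union>s\<in>S. actG (inv\<^bsub>G\<^esub> s) ` U) = topspace XG"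
      using Tc Tsep Tcov by blast
  qed
qed

end
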